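(* Let $n$ be an odd integer and $k\ge 1$ an integer with $2^k<n<2^{k+1}$, and set $a=n-2^k$. Then there is an orientation of the $n$-cube in which every vertex has in-degree $a$ or $n$.
   Context: The $n$-cube is the graph on binary $n$-tuples with edges between tuples differing in exactly one coordinate. An orientation assigns a direction to each edge; the in-degree of a vertex is the number of edges directed into it. *)

theory Defs
  imports Main
begin

definition cube_vertices :: "nat \<Rightarrow> bool list set" where
  "cube_vertices n = {xs. length xs = n}"

definition cube_adj :: "nat \<Rightarrow> bool list \<Rightarrow> bool list \<Rightarrow> bool" where
  "cube_adj n u v \<longleftrightarrow> u \<in> cube_vertices n \<and> v \<in> cube_vertices n
      \<and> card {i. i < n \<and> u ! i \<noteq> v ! i} = 1"

text \<open>An orientation: a relation D (D u v means the edge is directed from u to v)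
  supported on the edges, choosing exactly one direction for every edge.\<close>
definition is_cube_orientation :: "nat \<Rightarrow> (bool list \<Rightarrow> bool list \<Rightarrow> bool) \<Rightarrow> bool" where
  "is_cube_orientation n D \<longleftrightarrow>
     (\<forall>u v. D u v \<longrightarrow> cube_adj n u v) \<and>
     (\<forall>u v. cube_adj n u v \<longrightarrow> (D u v \<or> D v u) \<and> \<not> (D u v \<and> D v u))"

definition in_degree :: "nat \<Rightarrow> (bool list \<Rightarrow> bool list \<Rightarrow> bool) \<Rightarrow> bool list \<Rightarrow> nat" where
  "in_degree n D v = card {u \<in> cube_vertices n. D u v}"

end

theory Submission
  imports Defs
begin

definition flip :: "bool list \<Rightarrow> nat \<Rightarrow> bool list" where
  "flip u i = u[i := \<not> u ! i]"

fun par :: "bool list \<Rightarrow> bool" where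
  "par [] = False"
| "par (b # bs) = (b \<noteq> par bs)"

fun cc :: "nat \<Rightarrow> nat \<Rightarrow> bool list \<Rightarrow> nat" where
  "cc a j [] = 0"
| "cc a j (b # bs) = (if b then xor (j - a) (cc a (Suc j) bs) else cc a (Suc j) bs)"

lemma xor_lt: "(x::nat) < 2^k \<Longrightarrow> y < 2^k \<Longrightarrow> xor x y < 2^k"
  by (metis take_bit_nat_eq_self_iff take_bit_xor)

lemma xor_cancel: "xor (xor (m::nat) c) c = m"
  by (simp add: xor.assoc)

lemma length_flip[simp]: "length (flip u i) = length u"
  by (simp add: flip_def)

lemma flip_nth: "i < length u \<Longrightarrow> flip u i ! j = (if j = i then \<not> u ! i else u ! j)"
  by (simp add: flip_def)

lemma flip_flip[simp]: "flip (flip u i) i = u"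
  by (cases "i < length u") (simp_all add: flip_def list_update_beyond)

lemma xor_cancel2: "xor (x::nat) (xor x y) = y"
  by (simp add: xor.assoc[symmetric])

lemma flip_inj: "i < length u \<Longrightarrow> i' < length u \<Longrightarrow> flip u i = flip u i' \<Longrightarrow> i = i'"
  by (metis flip_nth)

lemma par_flip: "i < length u \<Longrightarrow> par (flip u i) = (\<not> par u)"
proof (induction u arbitrary: i)
  case Nil thus ?case by simp
next
  case (Cons b bs)
  show ?case
  proof (cases i)
    case 0 thus ?thesis by (simp add: flip_def)
  next
    case (Suc m)
    with Cons have "par (flip bs m) = (\<not> par bs)" by simp
    thus ?thesis using Suc by (simp add: flip_def)
  qed
qed

lemma cc_flip: "m < length bs \<Longrightarrow> cc a j (flip bs m) = xor (j + m - a) (cc a j bs)"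
proof (induction bs arbitrary: j m)
  case Nil thus ?case by simp
next
  case (Cons b bs)
  show ?case
  proof (cases m)
    case 0 thus ?thesis by (simp add: flip_def xor_cancel2)
  next
    case (Suc m')
    with Cons have "cc a (Suc j) (flip bs m') = xor (Suc j + m' - a) (cc a (Suc j) bs)" by simp
    thus ?thesis using Suc by (simp add: flip_def xor.left_commute)
  qed
qed

lemma cc_bound: "j + length bs \<le> a + 2^k \<Longrightarrow> cc a j bs < 2^k"
proof (induction bs arbitrary: j)
  case Nil thus ?case by simp
next
  case (Cons b bs)
  hence IH: "cc a (Suc j) bs < 2^k" by simp
  have "j < a + 2^k" using Cons.prems by simp
  hence "j - a < 2^k" by (cases "a \<le> j") (simp_all add: less_diff_conv2 add.commute)
  thus ?case using IH xor_lt by simp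
qed

lemma adj_iff: "cube_adj n u v \<longleftrightarrow> length v = n \<and> (\<exists>i<n. u = flip v i)"
proof
  assume A: "cube_adj n u v"
  hence lu: "length u = n" and lv: "length v = n" and c: "card {i. i < n \<and> u ! i \<noteq> v ! i} = 1"
    by (auto simp: cube_adj_def cube_vertices_def)
  from c obtain i where S: "{i. i < n \<and> u ! i \<noteq> v ! i} = {i}" using card_1_singletonE by blast
  hence i: "i < n" "u ! i \<noteq> v ! i" by auto
  have "u = flip v i"
  proof (rule nth_equalityI)
    show "length u = length (flip v i)" using lu lv by simp
    fix j assume "j < length u"
    hence "j < n" using lu by simp
    thus "u ! j = flip v i ! j" using S i lv by (auto simp: flip_nth)
  qed
  thus "length v = n \<and> (\<exists>i<n. u = flip v i)" using i lv by blast
next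
  assume "length v = n \<and> (\<exists>i<n. u = flip v i)"
  then obtain i where lv: "length v = n" and i: "i < n" and u: "u = flip v i" by blast
  have "{j. j < n \<and> u ! j \<noteq> v ! j} = {i}" using i lv u by (auto simp: flip_nth)
  thus "cube_adj n u v" using lv u by (simp add: cube_adj_def cube_vertices_def)
qed

theorem mainTheorem5:
  fixes n k :: nat
  assumes "odd n" and "k \<ge> 1" and "2 ^ k < n" and "n < 2 ^ (k + 1)"
  shows "\<exists>D. is_cube_orientation n D \<and>
           (\<forall>v \<in> cube_vertices n. in_degree n D v = n - 2 ^ k \<or> in_degree n D v = n)"
proof -
  define a where "a = n - 2 ^ k"
  have na: "n = a + 2 ^ k" and aless: "a < 2 ^ k" using assms by (auto simp: a_def)
  define P where "P u \<longleftrightarrow> \<not> par u \<and> cc a 0 u < a" for u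
  define cond where "cond u v i \<longleftrightarrow> (if par u then \<not> (P v \<and> a \<le> i) else P u \<and> a \<le> i)" for u v i
  define D where "D u v \<longleftrightarrow> length v = n \<and> (\<exists>i<n. u = flip v i \<and> cond u v i)" for u v
  have orient: "is_cube_orientation n D"
    unfolding is_cube_orientation_def
  proof (intro conjI allI impI)
    fix u v assume "D u v"
    thus "cube_adj n u v" unfolding D_def adj_iff by blast
  next
    fix u v assume "cube_adj n u v"
    then obtain i where lv: "length v = n" and i: "i < n" and u: "u = flip v i"
      unfolding adj_iff by blast
    have lu: "length u = n" and v: "v = flip u i" using lv u by auto
    have pu: "par u = (\<not> par v)" using u par_flip i lv by simp
    have Duv: "D u v \<longleftrightarrow> cond u v i"
      unfolding D_def using lv i u flip_inj by (metis)
    have Dvu: "D v u \<longleftrightarrow> cond v u i"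
      unfolding D_def using lu i v flip_inj by (metis)
    show "D u v \<or> D v u" and "\<not> (D u v \<and> D v u)"
      using Duv Dvu pu unfolding cond_def by (auto simp: P_def)
  qed
  have deg: "in_degree n D v = n - 2 ^ k \<or> in_degree n D v = n" if v: "v \<in> cube_vertices n" for v
  proof -
    have lv: "length v = n" using v by (simp add: cube_vertices_def)
    have eq: "{u \<in> cube_vertices n. D u v} = flip v ` {i. i < n \<and> cond (flip v i) v i}"
    proof
      show "{u \<in> cube_vertices n. D u v} \<subseteq> flip v ` {i. i < n \<and> cond (flip v i) v i}"
        unfolding D_def by auto
      show "flip v ` {i. i < n \<and> cond (flip v i) v i} \<subseteq> {u \<in> cube_vertices n. D u v}"
        unfolding D_def using lv by (auto simp: cube_vertices_def)
    qed
    have inj: "inj_on (flip v) {i. i < n \<and> cond (flip v i) v i}"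
      by (rule inj_onI) (use lv flip_inj in auto)
    have card: "in_degree n D v = card {i. i < n \<and> cond (flip v i) v i}"
      unfolding in_degree_def eq using card_image[OF inj] .
    show ?thesis
    proof (cases "par v")
      case False
      hence "cond (flip v i) v i \<longleftrightarrow> \<not> (P v \<and> a \<le> i)" if "i < n" for i
        using par_flip[of i v] that lv by (simp add: cond_def)
      hence S: "{i. i < n \<and> cond (flip v i) v i} = {i. i < n \<and> \<not> (P v \<and> a \<le> i)}" by auto
      show ?thesis
      proof (cases "P v")
        case True
        hence "{i. i < n \<and> \<not> (P v \<and> a \<le> i)} = {..<a}" using na by auto
        thus ?thesis using card S a_def by simp
      next
        case False
        hence "{i. i < n \<and> \<not> (P v \<and> a \<le> i)} = {..<n}" by auto
        thus ?thesis using card S by simp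
      qed
    next
      case True
      define c where "c = cc a 0 v"
      have cb: "c < 2 ^ k" unfolding c_def using cc_bound[of 0 v a k] lv na by simp
      have "cond (flip v i) v i \<longleftrightarrow> xor (i - a) c < a \<and> a \<le> i" if "i < n" for i
        using par_flip[of i v] that lv True cc_flip[of i v a 0]
        by (simp add: cond_def P_def c_def)
      hence S: "{i. i < n \<and> cond (flip v i) v i} = {i. i < n \<and> a \<le> i \<and> xor (i - a) c < a}"
        by auto
      have img: "{i. i < n \<and> a \<le> i \<and> xor (i - a) c < a} = (\<lambda>m. a + xor m c) ` {..<a}"
      proof
        show "{i. i < n \<and> a \<le> i \<and> xor (i - a) c < a} \<subseteq> (\<lambda>m. a + xor m c) ` {..<a}"
        proof
          fix i assume "i \<in> {i. i < n \<and> a \<le> i \<and> xor (i - a) c < a}"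
          hence h: "a \<le> i" "xor (i - a) c < a" by auto
          have "i = a + xor (xor (i - a) c) c" using h xor_cancel by simp
          thus "i \<in> (\<lambda>m. a + xor m c) ` {..<a}" using h by blast
        qed
        show "(\<lambda>m. a + xor m c) ` {..<a} \<subseteq> {i. i < n \<and> a \<le> i \<and> xor (i - a) c < a}"
        proof
          fix i assume "i \<in> (\<lambda>m. a + xor m c) ` {..<a}"
          then obtain m where m: "m < a" and i: "i = a + xor m c" by auto
          have "xor m c < 2 ^ k" using xor_lt[of m k c] m aless cb by simp
          thus "i \<in> {i. i < n \<and> a \<le> i \<and> xor (i - a) c < a}"
            using i m na xor_cancel by simp
        qed
      qed
      have inj2: "inj_on (\<lambda>m. a + xor m c) {..<a}"
        by (rule inj_onI) (metis add_left_cancel xor_cancel)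
      have "in_degree n D v = a" using card S img card_image[OF inj2] by simp
      thus ?thesis using a_def by simp
    qed
  qed
  show ?thesis using orient deg by blast
qed

end
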